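(* Let $f=\frac1n\sum_{i=1}^n f_i$ where each $f_i:\mathbb{R}^d\to\mathbb{R}$ is convex, differentiable and $L$-smooth, let $X\subset\mathbb{R}^d$ be compact convex, and assume there is $x^\star\in X$ with $f(x^\star)=\min_{\mathbb{R}^d}f=\min_X f$. Let $T\ge1$ and let $(x^{(t)})_{1\le t\le T}$ and $(g^{(t)})$ be generated by the AdaLVR algorithm (described in the context, with either AdaGrad variant and either gradient estimator type, and $p=1/n$ in the L-SVRG case). Then $$\mathbb{E}\Big[\sum_{t=1}^T\mathbb{E}_t\big[\|g^{(t)}\|^2\big]\Big]\le \mathbb{E}\Big[8L\sum_{t=1}^T\big(f(x^{(t)})-f(x^\star)\big)\Big]+4Ln\big(f(x^{(1)})-f(x^\star)\big).$$
   Context: AdaLVR algorithm with inputs $x^{(1)}\in\mathbb{R}^d$, $\eta>0$, $p\in(0,1)$: set $G_0=0$; for SAGA set $\tilde x_i^{(0)}=x^{(1)}$ ($1\le i\le n$), for L-SVRG set $\tilde x^{(0)}=x^{(1)}$. For $t=1,2,\dots$: sample $i(t)$ uniformly from $\{1,\dots,n\}$ independently of the past; compute (SAGA) $g^{(t)}=\nabla f_{i(t)}(x^{(t)})-\nabla f_{i(t)}(\tilde x^{(t-1)}_{i(t)})+\frac1n\sum_{i}\nabla f_i(\tilde x_i^{(t-1)})$ and set $\tilde x_{i}^{(t)}=x^{(t)}$ if $i=i(t)$, else $\tilde x_i^{(t)}=\tilde x_i^{(t-1)}$; or (L-SVRG) $g^{(t)}=\nabla f_{i(t)}(x^{(t)})-\nabla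 f_{i(t)}(\tilde x^{(t-1)})+\nabla f(\tilde x^{(t-1)})$, sample $Z^{(t)}\sim\mathrm{Bernoulli}(p)$ independently and set $\tilde x^{(t)}=x^{(t)}$ if $Z^{(t)}=1$, else $\tilde x^{(t)}=\tilde x^{(t-1)}$. Set $G_t=G_{t-1}+\|g^{(t)}\|^2$ (Norm) or $G_t=G_{t-1}+\operatorname{diag}(g^{(t)}g^{(t)\top})$ (Diagonal, off-diagonal entries zeroed), $A_t=G_t^{1/2}$, and $x^{(t+1)}\in\arg\min_{y\in X}\|y-(x^{(t)}-\eta A_t^{-1}g^{(t)})\|_{A_t}$, with $A_t^{-1}$ the Moore–Penrose pseudo-inverse and $\|v\|_A=\langle v,Av\rangle^{1/2}$. $\mathbb{E}_t$ denotes conditional expectation given the history up to the computation of $x^{(t)}$ (i.e. integrating over $i(t)$ and $Z^{(t)}$). *)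

theory Defs
  imports "HOL-Analysis.Analysis" "HOL-Probability.Probability"
begin

datatype adagrad_variant = NormVariant | DiagonalVariant
datatype estimator_type = SAGA | LSVRG

text \<open>Randomness: omega t = (i(t), Z(t)), indices i(t) in {0..<n} (0-based),
  Z(t) the Bernoulli coin (only used by L-SVRG). x is the trajectory t |-> x^(t)
  along the given outcome omega; grad i is the gradient of f_i.\<close>

fun saga_snap :: "(nat \<Rightarrow> nat \<times> bool) \<Rightarrow> (nat \<Rightarrow> 'v) \<Rightarrow> nat \<Rightarrow> nat \<Rightarrow> 'v" where
  "saga_snap \<omega> x i 0 = x 1"
| "saga_snap \<omega> x i (Suc t) = (if fst (\<omega> (Suc t)) = i then x (Suc t) else saga_snap \<omega> x i t)"

fun svrg_snap :: "(nat \<Rightarrow> nat \<times> bool) \<Rightarrow> (nat \<Rightarrow> 'v) \<Rightarrow> nat \<Rightarrow> 'v" where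
  "svrg_snap \<omega> x 0 = x 1"
| "svrg_snap \<omega> x (Suc t) = (if snd (\<omega> (Suc t)) then x (Suc t) else svrg_snap \<omega> x t)"

definition lvr_grad :: "estimator_type \<Rightarrow> nat \<Rightarrow> (nat \<Rightarrow> real^'d \<Rightarrow> real^'d)
    \<Rightarrow> (nat \<Rightarrow> nat \<times> bool) \<Rightarrow> (nat \<Rightarrow> real^'d) \<Rightarrow> nat \<Rightarrow> real^'d" where
  "lvr_grad est n grad \<omega> x t =
     (let i = fst (\<omega> t) in
      case est of
        SAGA \<Rightarrow> grad i (x t) - grad i (saga_snap \<omega> x i (t - 1))
                 + (1 / real n) *\<^sub>R (\<Sum>j<n. grad j (saga_snap \<omega> x j (t - 1)))
      | LSVRG \<Rightarrow> grad i (x t) - grad i (svrg_snap \<omega> x (t - 1))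
                 + (1 / real n) *\<^sub>R (\<Sum>j<n. grad j (svrg_snap \<omega> x (t - 1))))"

text \<open>The (diagonal) matrix A_t = G_t^(1/2), represented by its diagonal.\<close>
definition lvr_A :: "adagrad_variant \<Rightarrow> estimator_type \<Rightarrow> nat \<Rightarrow> (nat \<Rightarrow> real^'d \<Rightarrow> real^'d)
    \<Rightarrow> (nat \<Rightarrow> nat \<times> bool) \<Rightarrow> (nat \<Rightarrow> real^'d) \<Rightarrow> nat \<Rightarrow> real^'d" where
  "lvr_A ag est n grad \<omega> x t =
     (case ag of
        NormVariant \<Rightarrow> (\<chi> j. sqrt (\<Sum>s\<in>{1..t}. (norm (lvr_grad est n grad \<omega> x s))\<^sup>2))
      | DiagonalVariant \<Rightarrow> (\<chi> j. sqrt (\<Sum>s\<in>{1..t}. (lvr_grad est n grad \<omega> x s $ j)\<^sup>2)))"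

text \<open>Moore-Penrose pseudo-inverse of the diagonal matrix diag(a) applied to v.\<close>
definition diag_pinv_apply :: "real^'d \<Rightarrow> real^'d \<Rightarrow> real^'d" where
  "diag_pinv_apply a v = (\<chi> j. if a $ j = 0 then 0 else v $ j / a $ j)"

definition diag_norm :: "real^'d \<Rightarrow> real^'d \<Rightarrow> real" where
  "diag_norm a v = sqrt (\<Sum>j\<in>UNIV. a $ j * (v $ j)\<^sup>2)"

definition adalvr_step_ok :: "adagrad_variant \<Rightarrow> estimator_type \<Rightarrow> nat \<Rightarrow> (nat \<Rightarrow> real^'d \<Rightarrow> real^'d)
    \<Rightarrow> real \<Rightarrow> (real^'d) set \<Rightarrow> (nat \<Rightarrow> nat \<times> bool) \<Rightarrow> (nat \<Rightarrow> real^'d) \<Rightarrow> nat \<Rightarrow> bool" where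
  "adalvr_step_ok ag est n grad \<eta> X \<omega> x t =
     (let A = lvr_A ag est n grad \<omega> x t;
          g = lvr_grad est n grad \<omega> x t;
          z = x t - \<eta> *\<^sub>R diag_pinv_apply A g
      in is_arg_min (\<lambda>y. diag_norm A (y - z)) (\<lambda>y. y \<in> X) (x (Suc t)))"

definition step_pmf :: "nat \<Rightarrow> (nat \<times> bool) pmf" where
  "step_pmf n = pair_pmf (pmf_of_set {..<n}) (bernoulli_pmf (1 / real n))"

definition omega_pmf :: "nat \<Rightarrow> nat \<Rightarrow> (nat \<Rightarrow> nat \<times> bool) pmf" where
  "omega_pmf n T = Pi_pmf {1..T} (0, False) (\<lambda>_. step_pmf n)"

text \<open>E_t: integrate over (i(t), Z(t)) keeping all other random choices fixed.\<close>
definition cond_exp_t :: "nat \<Rightarrow> nat \<Rightarrow> ((nat \<Rightarrow> nat \<times> bool) \<Rightarrow> real) \<Rightarrow> (nat \<Rightarrow> nat \<times> bool) \<Rightarrow> real" where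
  "cond_exp_t n t h \<omega> = measure_pmf.expectation (step_pmf n) (\<lambda>c. h (fun_upd \<omega> t c))"

end

theory Submission
  imports Defs
begin


lemma line_deriv:
  fixes \<phi> :: "'a::real_inner \<Rightarrow> real"
  assumes "\<And>z. GDERIV \<phi> z :> g z"
  shows "((\<lambda>s. \<phi> (y + s *\<^sub>R v)) has_real_derivative (g (y + s *\<^sub>R v) \<bullet> v)) (at s)"
proof -
  have d1: "((\<lambda>s. y + s *\<^sub>R v) has_derivative (\<lambda>h. h *\<^sub>R v)) (at s)"
    by (auto intro!: derivative_eq_intros)
  have d2: "(\<phi> has_derivative (\<lambda>h. h \<bullet> g (y + s *\<^sub>R v))) (at (y + s *\<^sub>R v))"
    using assms unfolding gderiv_def by blast
  from has_derivative_compose[OF d1 d2]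
  have "((\<lambda>s. \<phi> (y + s *\<^sub>R v)) has_derivative (\<lambda>h. (h *\<^sub>R v) \<bullet> g (y + s *\<^sub>R v))) (at s)" .
  moreover have "(\<lambda>h. (h *\<^sub>R v) \<bullet> g (y + s *\<^sub>R v)) = (*) (g (y + s *\<^sub>R v) \<bullet> v)"
    by (auto simp: inner_commute)
  ultimately have "((\<lambda>s. \<phi> (y + s *\<^sub>R v)) has_derivative (*) (g (y + s *\<^sub>R v) \<bullet> v)) (at s)" by simp
  then show ?thesis by (simp add: has_field_derivative_def)
qed

lemma first_order_convex:
  fixes \<phi> :: "'a::real_inner \<Rightarrow> real"
  assumes cv: "convex_on UNIV \<phi>" and d: "\<And>z. GDERIV \<phi> z :> g z"
  shows "\<phi> x + g x \<bullet> (y - x) \<le> \<phi> y"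
proof -
  define h where "h s = \<phi> (x + s *\<^sub>R (y - x))" for s
  have "convex_on UNIV h"
  proof (rule convex_onI)
    fix t :: real and a b :: real assume "0 < t" "t < 1"
    then show "h ((1 - t) *\<^sub>R a + t *\<^sub>R b) \<le> (1 - t) * h a + t * h b"
      using convex_onD[OF cv, of t "x + a *\<^sub>R (y - x)" "x + b *\<^sub>R (y - x)"]
      by (simp add: h_def algebra_simps)
  qed simp
  moreover have "(h has_real_derivative (g (x + 0 *\<^sub>R (y - x)) \<bullet> (y - x))) (at 0)"
    unfolding h_def by (rule line_deriv[OF d])
  ultimately have "h 1 - h 0 \<ge> (g x \<bullet> (y - x)) * (1 - 0)"
    by (intro convex_on_imp_above_tangent[where A=UNIV]) auto
  then show ?thesis by (simp add: h_def)
qed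

lemma descent:
  fixes \<phi> :: "'a::real_inner \<Rightarrow> real"
  assumes d: "\<And>z. GDERIV \<phi> z :> g z"
    and sm: "\<And>y z. norm (g y - g z) \<le> L * norm (y - z)"
  shows "\<phi> (y + v) \<le> \<phi> y + g y \<bullet> v + L / 2 * (norm v)\<^sup>2"
proof -
  define h where "h s = \<phi> (y + s *\<^sub>R v) - s * (g y \<bullet> v) - L / 2 * s\<^sup>2 * (norm v)\<^sup>2" for s
  have "h 0 \<ge> h 1"
  proof (rule DERIV_nonpos_imp_nonincreasing[of 0 1 h])
    fix s :: real assume s: "0 \<le> s" "s \<le> 1"
    have "(h has_real_derivative (g (y + s *\<^sub>R v) \<bullet> v - g y \<bullet> v - L * s * (norm v)\<^sup>2)) (at s)"
      unfolding h_def
      by (rule derivative_eq_intros line_deriv[OF d] | simp)+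
    moreover have "g (y + s *\<^sub>R v) \<bullet> v - g y \<bullet> v - L * s * (norm v)\<^sup>2 \<le> 0"
    proof -
      have "g (y + s *\<^sub>R v) \<bullet> v - g y \<bullet> v = (g (y + s *\<^sub>R v) - g y) \<bullet> v"
        by (simp add: inner_diff_left)
      also have "\<dots> \<le> norm (g (y + s *\<^sub>R v) - g y) * norm v"
        by (rule norm_cauchy_schwarz)
      also have "\<dots> \<le> (L * norm (s *\<^sub>R v)) * norm v"
        using sm[of "y + s *\<^sub>R v" y] by (intro mult_right_mono) auto
      also have "\<dots> = L * s * (norm v)\<^sup>2" using s by (simp add: power2_eq_square)
      finally show ?thesis by simp
    qed
    ultimately show "\<exists>D. (h has_real_derivative D) (at s) \<and> D \<le> 0" by blast
  qed simp
  then show ?thesis by (simp add: h_def)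
qed

lemma cocoercive:
  fixes \<phi> :: "'a::real_inner \<Rightarrow> real"
  assumes cv: "convex_on UNIV \<phi>" and d: "\<And>z. GDERIV \<phi> z :> g z"
    and sm: "\<And>y z. norm (g y - g z) \<le> L * norm (y - z)" and L: "L \<ge> 0"
  shows "(norm (g y - g x))\<^sup>2 \<le> 2 * L * (\<phi> y - \<phi> x - g x \<bullet> (y - x))"
proof (cases "L = 0")
  case True
  then have "norm (g y - g x) \<le> 0" using sm[of y x] by simp
  then show ?thesis using True by simp
next
  case False
  with L have Lp: "L > 0" by simp
  define w where "w = g y - g x"
  define z0 where "z0 = y - (1 / L) *\<^sub>R w"
  have A: "\<phi> x + g x \<bullet> (z0 - x) \<le> \<phi> z0" by (rule first_order_convex[OF cv d])
  have B: "\<phi> (y + (- (1 / L) *\<^sub>R w)) \<le> \<phi> y + g y \<bullet> (- (1 / L) *\<^sub>R w) + L / 2 * (norm (- (1 / L) *\<^sub>R w))\<^sup>2"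
    by (rule descent[OF d sm])
  have e1: "y + (- (1 / L) *\<^sub>R w) = z0" by (simp add: z0_def)
  have e2: "g x \<bullet> (z0 - x) = g x \<bullet> (y - x) - (1 / L) * (g x \<bullet> w)"
    by (simp add: z0_def inner_diff_right algebra_simps)
  have e3: "g y \<bullet> (- (1 / L) *\<^sub>R w) = - (1 / L) * (g y \<bullet> w)" by simp
  have e4: "L / 2 * (norm (- (1 / L) *\<^sub>R w))\<^sup>2 = (1 / (2 * L)) * (norm w)\<^sup>2"
    using Lp by (simp add: power2_eq_square field_simps)
  have e5: "g y \<bullet> w - g x \<bullet> w = (norm w)\<^sup>2"
    by (simp add: w_def inner_diff_left power2_norm_eq_inner)
  from A B e1 e2 e3 e4
  have "\<phi> x + g x \<bullet> (y - x) \<le> \<phi> y - (1 / L) * (g y \<bullet> w - g x \<bullet> w) + (1 / (2 * L)) * (norm w)\<^sup>2"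
    by (simp add: algebra_simps)
  then have "\<phi> x + g x \<bullet> (y - x) \<le> \<phi> y - (1 / (2 * L)) * (norm w)\<^sup>2"
    using e5 Lp by (simp add: field_simps)
  then have "(1 / (2 * L)) * (norm w)\<^sup>2 \<le> \<phi> y - \<phi> x - g x \<bullet> (y - x)" by simp
  then have "2 * L * ((1 / (2 * L)) * (norm w)\<^sup>2) \<le> 2 * L * (\<phi> y - \<phi> x - g x \<bullet> (y - x))"
    using Lp by (intro mult_left_mono) auto
  then show ?thesis using Lp by (simp add: w_def)
qed



lemma exp_fin:
  fixes h :: "'a \<Rightarrow> real"
  assumes "finite (set_pmf M)"
  shows "measure_pmf.expectation M h = (\<Sum>a\<in>set_pmf M. h a * pmf M a)"
  by (rule integral_measure_pmf_real) (use assms in auto)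

lemma exp_swap:
  fixes F :: "'a \<Rightarrow> 'b \<Rightarrow> real"
  assumes fa: "finite (set_pmf A)" and fb: "finite (set_pmf B)"
  shows "measure_pmf.expectation A (\<lambda>a. measure_pmf.expectation B (\<lambda>b. F a b))
       = measure_pmf.expectation B (\<lambda>b. measure_pmf.expectation A (\<lambda>a. F a b))"
proof -
  have "measure_pmf.expectation A (\<lambda>a. measure_pmf.expectation B (\<lambda>b. F a b))
      = (\<Sum>a\<in>set_pmf A. \<Sum>b\<in>set_pmf B. F a b * pmf B b * pmf A a)"
    by (simp add: exp_fin[OF fa] exp_fin[OF fb] sum_distrib_right)
  also have "\<dots> = (\<Sum>b\<in>set_pmf B. \<Sum>a\<in>set_pmf A. F a b * pmf B b * pmf A a)"
    by (rule sum.swap)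
  also have "\<dots> = measure_pmf.expectation B (\<lambda>b. measure_pmf.expectation A (\<lambda>a. F a b))"
    by (simp add: exp_fin[OF fa] exp_fin[OF fb] sum_distrib_left mult_ac)
  finally show ?thesis .
qed

lemma exp_pair:
  fixes F :: "'a \<times> 'b \<Rightarrow> real"
  assumes fa: "finite (set_pmf A)" and fb: "finite (set_pmf B)"
  shows "measure_pmf.expectation (pair_pmf A B) F
       = measure_pmf.expectation A (\<lambda>a. measure_pmf.expectation B (\<lambda>b. F (a, b)))"
proof -
  have fp: "finite (set_pmf (pair_pmf A B))" using fa fb by simp
  have "measure_pmf.expectation (pair_pmf A B) F = (\<Sum>p\<in>set_pmf A \<times> set_pmf B. F p * pmf (pair_pmf A B) p)"
    by (simp add: exp_fin[OF fp])
  also have "\<dots> = (\<Sum>a\<in>set_pmf A. \<Sum>b\<in>set_pmf B. F (a, b) * pmf (pair_pmf A B) (a, b))"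
    by (simp add: sum.cartesian_product case_prod_beta')
  also have "\<dots> = measure_pmf.expectation A (\<lambda>a. measure_pmf.expectation B (\<lambda>b. F (a, b)))"
    by (simp add: exp_fin[OF fa] exp_fin[OF fb] sum_distrib_left pmf_pair ac_simps)
  finally show ?thesis .
qed

lemma finite_step: "n \<ge> 1 \<Longrightarrow> finite (set_pmf (step_pmf n))"
proof -
  assume "n \<ge> 1"
  then have "set_pmf (pmf_of_set {..<n}) = {..<n}" by (intro set_pmf_of_set) (auto simp: lessThan_empty_iff)
  moreover have "finite (set_pmf (bernoulli_pmf p))" for p by (rule finite_subset[OF subset_UNIV]) simp
  ultimately show ?thesis unfolding step_pmf_def by simp
qed

lemma finite_Pi_step: "n \<ge> 1 \<Longrightarrow> finite A \<Longrightarrow> finite (set_pmf (Pi_pmf A d (\<lambda>_. step_pmf n)))"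
  by (subst set_Pi_pmf) (auto intro!: finite_step)

lemma exp_const: "measure_pmf.expectation (M :: 'a pmf) (\<lambda>_. c) = (c::real)"
  by simp

lemma tower:
  fixes h :: "(nat \<Rightarrow> nat \<times> bool) \<Rightarrow> real"
  assumes n: "n \<ge> 1" and t: "t \<in> {1..T}"
  shows "measure_pmf.expectation (omega_pmf n T) (cond_exp_t n t h) = measure_pmf.expectation (omega_pmf n T) h"
proof -
  define A where "A = {1..T} - {t}"
  define P where "P = Pi_pmf A (0, False) (\<lambda>_. step_pmf n)"
  have fA: "finite A" by (simp add: A_def)
  have eq: "omega_pmf n T = map_pmf (\<lambda>(y, f). f(t := y)) (pair_pmf (step_pmf n) P)"
  proof -
    have "{1..T} = insert t A" using t by (auto simp: A_def)
    then have "omega_pmf n T = Pi_pmf (insert t A) (0, False) (\<lambda>_. step_pmf n)"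
      by (simp add: omega_pmf_def)
    also have "\<dots> = map_pmf (\<lambda>(y, f). f(t := y)) (pair_pmf (step_pmf n) P)"
      unfolding P_def by (rule Pi_pmf_insert[OF fA]) (simp add: A_def)
    finally show ?thesis .
  qed
  have fS: "finite (set_pmf (step_pmf n))" by (rule finite_step[OF n])
  have fP: "finite (set_pmf P)" unfolding P_def by (rule finite_Pi_step[OF n fA])
  have "measure_pmf.expectation (omega_pmf n T) (cond_exp_t n t h)
      = measure_pmf.expectation (step_pmf n) (\<lambda>y. measure_pmf.expectation P
           (\<lambda>f. measure_pmf.expectation (step_pmf n) (\<lambda>c. h (f(t := c)))))"
    unfolding eq by (simp add: exp_pair[OF fS fP] cond_exp_t_def case_prod_unfold)
  also have "\<dots> = measure_pmf.expectation P (\<lambda>f. measure_pmf.expectation (step_pmf n) (\<lambda>c. h (f(t := c))))"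
    by simp
  also have "\<dots> = measure_pmf.expectation (step_pmf n) (\<lambda>c. measure_pmf.expectation P (\<lambda>f. h (f(t := c))))"
    by (rule exp_swap[OF fP fS])
  also have "\<dots> = measure_pmf.expectation (omega_pmf n T) h"
    unfolding eq by (simp add: exp_pair[OF fS fP] case_prod_unfold)
  finally show ?thesis .
qed



definition snp :: "estimator_type \<Rightarrow> (nat \<Rightarrow> nat \<times> bool) \<Rightarrow> (nat \<Rightarrow> 'v) \<Rightarrow> nat \<Rightarrow> nat \<Rightarrow> 'v" where
  "snp est \<omega> xx k j = (case est of SAGA \<Rightarrow> saga_snap \<omega> xx j k | LSVRG \<Rightarrow> svrg_snap \<omega> xx k)"

lemma lvr_grad_snp:
  "lvr_grad est n grad \<omega> xx t =
     grad (fst (\<omega> t)) (xx t) - grad (fst (\<omega> t)) (snp est \<omega> xx (t - 1) (fst (\<omega> t)))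
     + (1 / real n) *\<^sub>R (\<Sum>j<n. grad j (snp est \<omega> xx (t - 1) j))"
  by (cases est) (simp_all add: lvr_grad_def snp_def Let_def)

lemma snp_0: "snp est \<omega> xx 0 j = xx 1"
  by (cases est) (simp_all add: snp_def)

lemma snp_Suc: "snp est \<omega> xx (Suc k) j =
   (case est of SAGA \<Rightarrow> (if fst (\<omega> (Suc k)) = j then xx (Suc k) else snp est \<omega> xx k j)
              | LSVRG \<Rightarrow> (if snd (\<omega> (Suc k)) then xx (Suc k) else snp est \<omega> xx k j))"
  by (cases est) (simp_all add: snp_def)

lemma snp_local:
  assumes "\<And>s. 1 \<le> s \<Longrightarrow> s \<le> k \<Longrightarrow> \<omega> s = \<omega>' s \<and> xx s = xx' s" and "xx 1 = xx' 1"
  shows "snp est \<omega> xx k j = snp est \<omega>' xx' k j"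
  using assms
proof (induction k)
  case 0
  then show ?case by (simp add: snp_0)
next
  case (Suc k)
  have IH: "snp est \<omega> xx k j = snp est \<omega>' xx' k j" using Suc by auto
  have "\<omega> (Suc k) = \<omega>' (Suc k)" "xx (Suc k) = xx' (Suc k)" using Suc.prems(1)[of "Suc k"] by auto
  then show ?case using IH by (cases est) (simp_all add: snp_Suc)
qed

lemma norm_diff_sq_le:
  fixes a b :: "'a::real_inner"
  shows "(norm (a - b))\<^sup>2 \<le> 2 * (norm a)\<^sup>2 + 2 * (norm b)\<^sup>2"
proof -
  have "0 \<le> (norm (a + b))\<^sup>2" by simp
  then show ?thesis
    by (simp add: power2_norm_eq_inner inner_diff_left inner_diff_right inner_add_left inner_add_right inner_commute)
qed

lemma var_bound:
  fixes u v :: "nat \<Rightarrow> 'a::real_inner"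
  assumes n: "n \<ge> 1"
  shows "(1 / real n) * (\<Sum>j<n. (norm (u j - v j + (1 / real n) *\<^sub>R (\<Sum>k<n. v k)))\<^sup>2)
     \<le> 2 * ((1 / real n) * (\<Sum>j<n. (norm (u j))\<^sup>2)) + 2 * ((1 / real n) * (\<Sum>j<n. (norm (v j))\<^sup>2))"
proof -
  define vb where "vb = (1 / real n) *\<^sub>R (\<Sum>k<n. v k)"
  have sv: "(\<Sum>k<n. v k) = real n *\<^sub>R vb" using n by (simp add: vb_def)
  have t1: "(norm (u j - v j + vb))\<^sup>2 \<le> 2 * (norm (u j))\<^sup>2 + 2 * (norm (v j - vb))\<^sup>2" for j
    using norm_diff_sq_le[of "u j" "v j - vb"] by (simp add: algebra_simps)
  have t2: "(norm (v j - vb))\<^sup>2 = (norm (v j))\<^sup>2 - 2 * (v j \<bullet> vb) + (norm vb)\<^sup>2" for j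
    by (simp add: power2_norm_eq_inner inner_diff_left inner_diff_right inner_commute)
  have "(\<Sum>j<n. (norm (v j - vb))\<^sup>2) = (\<Sum>j<n. (norm (v j))\<^sup>2) - 2 * ((\<Sum>j<n. v j) \<bullet> vb) + real n * (norm vb)\<^sup>2"
    by (simp add: t2 sum.distrib sum_subtractf inner_sum_left sum_distrib_left)
  also have "\<dots> = (\<Sum>j<n. (norm (v j))\<^sup>2) - real n * (norm vb)\<^sup>2"
    by (simp add: sv power2_norm_eq_inner)
  also have "\<dots> \<le> (\<Sum>j<n. (norm (v j))\<^sup>2)" by simp
  finally have t3: "(\<Sum>j<n. (norm (v j - vb))\<^sup>2) \<le> (\<Sum>j<n. (norm (v j))\<^sup>2)" .
  have "(\<Sum>j<n. (norm (u j - v j + vb))\<^sup>2) \<le> (\<Sum>j<n. 2 * (norm (u j))\<^sup>2 + 2 * (norm (v j - vb))\<^sup>2)"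
    by (rule sum_mono[OF t1])
  also have "\<dots> = 2 * (\<Sum>j<n. (norm (u j))\<^sup>2) + 2 * (\<Sum>j<n. (norm (v j - vb))\<^sup>2)"
    by (simp add: sum.distrib sum_distrib_left)
  also have "\<dots> \<le> 2 * (\<Sum>j<n. (norm (u j))\<^sup>2) + 2 * (\<Sum>j<n. (norm (v j))\<^sup>2)"
    using t3 by simp
  finally have "(\<Sum>j<n. (norm (u j - v j + vb))\<^sup>2) \<le> 2 * (\<Sum>j<n. (norm (u j))\<^sup>2) + 2 * (\<Sum>j<n. (norm (v j))\<^sup>2)" .
  then have "(1 / real n) * (\<Sum>j<n. (norm (u j - v j + vb))\<^sup>2) \<le> (1 / real n) * (2 * (\<Sum>j<n. (norm (u j))\<^sup>2) + 2 * (\<Sum>j<n. (norm (v j))\<^sup>2))"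
    by (intro mult_left_mono) auto
  then show ?thesis by (simp add: vb_def algebra_simps)
qed

lemma sum_if_eq:
  fixes A B :: real
  assumes "j < n"
  shows "(\<Sum>i<n. if i = j then A else B) = A + (real n - 1) * B"
proof -
  have "(\<Sum>i<n. if i = j then A else B) = (\<Sum>i<n. B + (if i = j then A - B else 0))"
    by (intro sum.cong) auto
  also have "\<dots> = real n * B + (A - B)" using assms by (simp add: sum.distrib)
  finally show ?thesis by (simp add: algebra_simps)
qed

lemma telescope:
  fixes a :: "nat \<Rightarrow> real"
  shows "(\<Sum>t\<in>{1..T}. a (t - 1) - a t) = a 0 - a T"
  by (induction T) auto



theorem proposition1:
  fixes n T :: nat and L \<eta> :: real and ag :: adagrad_variant and est :: estimator_type
    and fi :: "nat \<Rightarrow> real^'d \<Rightarrow> real" and grad :: "nat \<Rightarrow> real^'d \<Rightarrow> real^'d"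
    and f :: "real^'d \<Rightarrow> real" and X :: "(real^'d) set" and xstar x1 :: "real^'d"
    and x :: "(nat \<Rightarrow> nat \<times> bool) \<Rightarrow> nat \<Rightarrow> real^'d"
  assumes n: "n \<ge> 1"
    and f_def: "\<And>y. f y = (1 / real n) * (\<Sum>i<n. fi i y)"
    and convex: "\<And>i. i < n \<Longrightarrow> convex_on UNIV (fi i)"
    and grad: "\<And>i y. i < n \<Longrightarrow> GDERIV (fi i) y :> grad i y"
    and smooth: "\<And>i y z. i < n \<Longrightarrow> norm (grad i y - grad i z) \<le> L * norm (y - z)"
    and X: "compact X" "convex X"
    and xstar: "xstar \<in> X" "\<And>y. f xstar \<le> f y"
    and T: "T \<ge> 1"
    and eta: "\<eta> > 0"
    and init: "\<And>\<omega>. x \<omega> 1 = x1"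
    and adapted: "\<And>\<omega> \<omega>' t. 1 \<le> t \<Longrightarrow> t \<le> T \<Longrightarrow> (\<And>s. 1 \<le> s \<Longrightarrow> s < t \<Longrightarrow> \<omega> s = \<omega>' s)
                    \<Longrightarrow> x \<omega> t = x \<omega>' t"
    and steps: "\<And>\<omega> t. 1 \<le> t \<Longrightarrow> t < T \<Longrightarrow> adalvr_step_ok ag est n grad \<eta> X \<omega> (x \<omega>) t"
  shows "measure_pmf.expectation (omega_pmf n T)
           (\<lambda>\<omega>. \<Sum>t\<in>{1..T}. cond_exp_t n t (\<lambda>\<omega>'. (norm (lvr_grad est n grad \<omega>' (x \<omega>') t))\<^sup>2) \<omega>)
         \<le> measure_pmf.expectation (omega_pmf n T)
              (\<lambda>\<omega>. 8 * L * (\<Sum>t\<in>{1..T}. f (x \<omega> t) - f xstar))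
           + 4 * L * real n * (f x1 - f xstar)"
proof -
  have np: "real n > 0" using n by simp
  have L0: "L \<ge> 0"
  proof -
    define z :: "real^'d" where "z = (\<chi> i. 1)"
    have "z \<noteq> 0" by (simp add: z_def vec_eq_iff)
    then have nz: "norm (0 - z) > 0" by simp
    have "0 \<le> norm (grad 0 0 - grad 0 z)" by simp
    also have "\<dots> \<le> L * norm (0 - z)" using smooth[of 0 0 z] n by simp
    finally show ?thesis using nz by (simp add: zero_le_mult_iff)
  qed
  have gsum0: "(\<Sum>j<n. grad j xstar) = 0"
  proof -
    define G where "G = (1 / real n) *\<^sub>R (\<Sum>j<n. grad j xstar)"
    have fe: "f = (\<lambda>y. (1 / real n) * (\<Sum>i<n. fi i y))" using f_def by (rule ext)
    have "((\<lambda>y. (1 / real n) * (\<Sum>i<n. fi i y)) has_derivative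
            (\<lambda>h. (1 / real n) * (\<Sum>i<n. h \<bullet> grad i xstar))) (at xstar)"
      using grad unfolding gderiv_def
      by (intro has_derivative_mult_right has_derivative_sum) auto
    moreover have "(\<lambda>h. (1 / real n) * (\<Sum>i<n. h \<bullet> grad i xstar)) = (\<lambda>h. h \<bullet> G)"
      by (auto simp: G_def inner_sum_right)
    ultimately have "(f has_derivative (\<lambda>h. h \<bullet> G)) (at xstar)" using fe by simp
    then have "(\<lambda>h. h \<bullet> G) = (\<lambda>h. 0)"
      by (rule has_derivative_local_min) (auto intro: always_eventually xstar(2))
    then have "G \<bullet> G = 0" by meson
    then have "G = 0" by simp
    then show ?thesis using np by (simp add: G_def)
  qed
  define hb where "hb j y = fi j y - fi j xstar - grad j xstar \<bullet> (y - xstar)" for j y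
  have hb_nonneg: "hb j y \<ge> 0" if "j < n" for j y
    using first_order_convex[OF convex[OF that] grad[OF that], of xstar y] by (simp add: hb_def)
  have coco: "(norm (grad j y - grad j xstar))\<^sup>2 \<le> 2 * L * hb j y" if "j < n" for j y
    unfolding hb_def
    by (rule cocoercive[OF convex[OF that] grad[OF that] smooth[OF that] L0])
  have Hsum: "(1 / real n) * (\<Sum>j<n. hb j y) = f y - f xstar" for y
  proof -
    have "(\<Sum>j<n. hb j y) = (\<Sum>j<n. fi j y) - (\<Sum>j<n. fi j xstar) - (\<Sum>j<n. grad j xstar) \<bullet> (y - xstar)"
      by (simp add: hb_def sum_subtractf inner_sum_left)
    then have "(\<Sum>j<n. hb j y) = (\<Sum>j<n. fi j y) - (\<Sum>j<n. fi j xstar)" using gsum0 by simp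
    then show ?thesis by (simp add: f_def right_diff_distrib)
  qed
  define S where "S \<omega> k j = snp est \<omega> (x \<omega>) k j" for \<omega> k j
  define D where "D \<omega> k = (1 / real n) * (\<Sum>j<n. hb j (S \<omega> k j))" for \<omega> k
  define F where "F \<omega> t = f (x \<omega> t) - f xstar" for \<omega> t
  have D_nonneg: "D \<omega> k \<ge> 0" for \<omega> k
    unfolding D_def using hb_nonneg np by (intro mult_nonneg_nonneg sum_nonneg) auto
  have D0: "D \<omega> 0 = f x1 - f xstar" for \<omega>
    using Hsum[of x1] init[of \<omega>] by (simp add: D_def S_def snp_0)
  have loc_x: "x (w(t := c)) s = x w s" if "t \<in> {1..T}" "1 \<le> s" "s \<le> t" for w t c s
    using that by (intro adapted) auto
  have loc_S: "S (w(t := c)) (t - 1) j = S w (t - 1) j" if "t \<in> {1..T}" for w t c j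
    unfolding S_def
    by (rule snp_local) (use that loc_x[OF that] in \<open>auto simp: init\<close>)
  have grad_eq: "lvr_grad est n grad (w(t := c)) (x (w(t := c))) t
      = grad (fst c) (x w t) - grad (fst c) (S w (t - 1) (fst c)) + (1 / real n) *\<^sub>R (\<Sum>j<n. grad j (S w (t - 1) j))"
    if "t \<in> {1..T}" for w t c
    using loc_S[OF that] loc_x[OF that, of t] that
    by (simp add: lvr_grad_snp S_def[symmetric])
  have S_step: "S (w(t := c)) t j = (case est of SAGA \<Rightarrow> (if fst c = j then x w t else S w (t - 1) j)
                  | LSVRG \<Rightarrow> (if snd c then x w t else S w (t - 1) j))"
    if tT: "t \<in> {1..T}" for w t c j
  proof -
    obtain k where tk: "t = Suc k" using tT by (cases t) auto
    have l1: "snp est (w(Suc k := c)) (x (w(Suc k := c))) k j = snp est w (x w) k j"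
      using loc_S[OF tT, of w c j] tk by (simp add: S_def)
    have l2: "x (w(Suc k := c)) (Suc k) = x w (Suc k)" using loc_x[OF tT, of t w c] tT tk by simp
    show ?thesis unfolding S_def tk using l1 l2 by (cases est) (simp_all add: snp_Suc)
  qed
  have bound1: "cond_exp_t n t (\<lambda>w'. (norm (lvr_grad est n grad w' (x w') t))\<^sup>2) w
      \<le> 4 * L * F w t + 4 * L * D w (t - 1)" if tT: "t \<in> {1..T}" for w t
  proof -
    define s where "s j = S w (t - 1) j" for j
    define \<Phi> where "\<Phi> j = (norm (grad j (x w t) - grad j (s j) + (1 / real n) *\<^sub>R (\<Sum>k<n. grad k (s k))))\<^sup>2" for j
    define u where "u j = grad j (x w t) - grad j xstar" for j
    define v where "v j = grad j (s j) - grad j xstar" for j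
    have "cond_exp_t n t (\<lambda>w'. (norm (lvr_grad est n grad w' (x w') t))\<^sup>2) w
        = measure_pmf.expectation (step_pmf n) (\<lambda>c. \<Phi> (fst c))"
      unfolding cond_exp_t_def \<Phi>_def s_def using grad_eq[OF tT] by simp
    also have "\<dots> = (\<Sum>j<n. \<Phi> j) / real n"
      unfolding step_pmf_def using n by (simp add: integral_pmf_of_set lessThan_empty_iff)
    also have "\<dots> = (1 / real n) * (\<Sum>j<n. (norm (u j - v j + (1 / real n) *\<^sub>R (\<Sum>k<n. v k)))\<^sup>2)"
    proof -
      have "(\<Sum>k<n. v k) = (\<Sum>k<n. grad k (s k))" by (simp add: v_def sum_subtractf gsum0)
      then show ?thesis by (simp add: \<Phi>_def u_def v_def)
    qed
    also have "\<dots> \<le> 2 * ((1 / real n) * (\<Sum>j<n. (norm (u j))\<^sup>2)) + 2 * ((1 / real n) * (\<Sum>j<n. (norm (v j))\<^sup>2))"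
      by (rule var_bound[OF n])
    also have "\<dots> \<le> 2 * (2 * L * F w t) + 2 * (2 * L * D w (t - 1))"
    proof -
      have "(\<Sum>j<n. (norm (u j))\<^sup>2) \<le> (\<Sum>j<n. 2 * L * hb j (x w t))"
        by (rule sum_mono) (simp add: u_def coco)
      also have "\<dots> = 2 * L * (\<Sum>j<n. hb j (x w t))" by (simp add: sum_distrib_left)
      finally have a: "(1 / real n) * (\<Sum>j<n. (norm (u j))\<^sup>2) \<le> 2 * L * F w t"
        using Hsum[of "x w t"] np by (simp add: F_def divide_right_mono mult.assoc[symmetric] flip: Hsum)
      have "(\<Sum>j<n. (norm (v j))\<^sup>2) \<le> (\<Sum>j<n. 2 * L * hb j (s j))"
        by (rule sum_mono) (simp add: v_def coco)
      also have "\<dots> = 2 * L * (\<Sum>j<n. hb j (s j))" by (simp add: sum_distrib_left)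
      finally have b: "(1 / real n) * (\<Sum>j<n. (norm (v j))\<^sup>2) \<le> 2 * L * D w (t - 1)"
        using np by (simp add: D_def s_def field_simps)
      show ?thesis using a b by simp
    qed
    finally show ?thesis by simp
  qed
  have bound2: "cond_exp_t n t (\<lambda>w'. D w' t) w = (1 - 1 / real n) * D w (t - 1) + (1 / real n) * F w t"
    if tT: "t \<in> {1..T}" for w t
  proof -
    define s where "s j = S w (t - 1) j" for j
    define Ax where "Ax = (\<Sum>j<n. hb j (x w t))"
    define As where "As = (\<Sum>j<n. hb j (s j))"
    have Fx: "F w t = (1 / real n) * Ax" using Hsum[of "x w t"] by (simp add: F_def Ax_def)
    have Ds: "D w (t - 1) = (1 / real n) * As" by (simp add: D_def As_def s_def)
    show ?thesis
    proof (cases est)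
      case SAGA
      define \<Psi> where "\<Psi> i = (1 / real n) * (\<Sum>j<n. hb j (if i = j then x w t else s j))" for i
      have "cond_exp_t n t (\<lambda>w'. D w' t) w = measure_pmf.expectation (step_pmf n) (\<lambda>c. \<Psi> (fst c))"
        unfolding cond_exp_t_def D_def \<Psi>_def s_def
        by (rule Bochner_Integration.integral_cong[OF refl]) (simp add: S_step[OF tT] SAGA)
      also have "\<dots> = (\<Sum>i<n. \<Psi> i) / real n"
        unfolding step_pmf_def using n by (simp add: integral_pmf_of_set lessThan_empty_iff)
      also have "(\<Sum>i<n. \<Psi> i) = (1 / real n) * (\<Sum>j<n. \<Sum>i<n. (if i = j then hb j (x w t) else hb j (s j)))"
        unfolding \<Psi>_def sum_distrib_left[symmetric] by (subst sum.swap) (simp add: if_distrib)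
      also have "(\<Sum>j<n. \<Sum>i<n. (if i = j then hb j (x w t) else hb j (s j)))
                 = (\<Sum>j<n. hb j (x w t) + (real n - 1) * hb j (s j))"
        by (rule sum.cong) (simp_all add: sum_if_eq)
      also have "\<dots> = Ax + (real n - 1) * As"
        by (simp add: Ax_def As_def sum.distrib sum_distrib_left)
      finally have "cond_exp_t n t (\<lambda>w'. D w' t) w = (1 / real n) * (Ax + (real n - 1) * As) / real n" .
      then show ?thesis unfolding Fx Ds using np by (simp add: field_simps)
    next
      case LSVRG
      define \<Xi> where "\<Xi> z = (if z then (1 / real n) * Ax else (1 / real n) * As)" for z
      have "cond_exp_t n t (\<lambda>w'. D w' t) w = measure_pmf.expectation (step_pmf n) (\<lambda>c. \<Xi> (snd c))"
        unfolding cond_exp_t_def D_def \<Xi>_def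
        apply (rule Bochner_Integration.integral_cong[OF refl])
        subgoal for c by (cases "snd c") (simp_all add: S_step[OF tT] LSVRG Ax_def As_def s_def)
        done
      also have "\<dots> = \<Xi> True * (1 / real n) + \<Xi> False * (1 - 1 / real n)"
        unfolding step_pmf_def using n by simp
      finally show ?thesis unfolding Fx Ds by (simp add: \<Xi>_def algebra_simps)
    qed
  qed
  define Om where "Om = omega_pmf n T"
  have finO: "finite (set_pmf Om)" unfolding Om_def omega_pmf_def by (rule finite_Pi_step[OF n]) simp
  have int: "integrable (measure_pmf Om) h" for h :: "(nat \<Rightarrow> nat \<times> bool) \<Rightarrow> real"
    by (rule integrable_measure_pmf_finite[OF finO])
  define EF where "EF t = measure_pmf.expectation Om (\<lambda>w. F w t)" for t
  define ED where "ED k = measure_pmf.expectation Om (\<lambda>w. D w k)" for k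
  have stepD: "ED t = (1 - 1 / real n) * ED (t - 1) + (1 / real n) * EF t" if tT: "t \<in> {1..T}" for t
  proof -
    have "ED t = measure_pmf.expectation Om (cond_exp_t n t (\<lambda>w'. D w' t))"
      unfolding ED_def Om_def by (rule tower[OF n tT, symmetric])
    also have "\<dots> = measure_pmf.expectation Om (\<lambda>w. (1 - 1 / real n) * D w (t - 1) + (1 / real n) * F w t)"
      by (rule Bochner_Integration.integral_cong[OF refl]) (rule bound2[OF tT])
    also have "\<dots> = (1 - 1 / real n) * ED (t - 1) + (1 / real n) * EF t"
      by (simp add: int ED_def EF_def)
    finally show ?thesis .
  qed
  have stepD': "ED (t - 1) = EF t + real n * (ED (t - 1) - ED t)" if tT: "t \<in> {1..T}" for t
    using stepD[OF tT] np by (simp add: field_simps)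
  have sumD: "(\<Sum>t\<in>{1..T}. ED (t - 1)) = (\<Sum>t\<in>{1..T}. EF t) + real n * (ED 0 - ED T)"
  proof -
    have "(\<Sum>t\<in>{1..T}. ED (t - 1)) = (\<Sum>t\<in>{1..T}. EF t + real n * (ED (t - 1) - ED t))"
      by (rule sum.cong[OF refl]) (rule stepD')
    also have "\<dots> = (\<Sum>t\<in>{1..T}. EF t) + real n * (\<Sum>t\<in>{1..T}. ED (t - 1) - ED t)"
      by (simp add: sum.distrib sum_distrib_left)
    also have "(\<Sum>t\<in>{1..T}. ED (t - 1) - ED t) = ED 0 - ED T" by (rule telescope)
    finally show ?thesis .
  qed
  have ED0: "ED 0 = f x1 - f xstar" by (simp add: ED_def D0)
  have EDT: "ED T \<ge> 0" unfolding ED_def by (rule Bochner_Integration.integral_nonneg) (rule D_nonneg)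
  have "measure_pmf.expectation Om
           (\<lambda>w. \<Sum>t\<in>{1..T}. cond_exp_t n t (\<lambda>w'. (norm (lvr_grad est n grad w' (x w') t))\<^sup>2) w)
        \<le> measure_pmf.expectation Om (\<lambda>w. \<Sum>t\<in>{1..T}. 4 * L * F w t + 4 * L * D w (t - 1))"
    by (rule integral_mono[OF int int]) (rule sum_mono, rule bound1)
  also have "\<dots> = (\<Sum>t\<in>{1..T}. 4 * L * EF t + 4 * L * ED (t - 1))"
    by (simp add: int Bochner_Integration.integral_sum EF_def ED_def)
  also have "\<dots> = 8 * L * (\<Sum>t\<in>{1..T}. EF t) + 4 * L * real n * ED 0 - 4 * L * real n * ED T"
  proof -
    have "(\<Sum>t\<in>{1..T}. 4 * L * EF t + 4 * L * ED (t - 1))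
        = 4 * L * (\<Sum>t\<in>{1..T}. EF t) + 4 * L * (\<Sum>t\<in>{1..T}. ED (t - 1))"
      by (simp add: sum.distrib sum_distrib_left)
    also have "\<dots> = 8 * L * (\<Sum>t\<in>{1..T}. EF t) + 4 * L * real n * ED 0 - 4 * L * real n * ED T"
      unfolding sumD by (simp add: algebra_simps)
    finally show ?thesis .
  qed
  also have "\<dots> \<le> 8 * L * (\<Sum>t\<in>{1..T}. EF t) + 4 * L * real n * (f x1 - f xstar)"
    using ED0 EDT L0 np by simp
  also have "8 * L * (\<Sum>t\<in>{1..T}. EF t) = measure_pmf.expectation Om
              (\<lambda>w. 8 * L * (\<Sum>t\<in>{1..T}. f (x w t) - f xstar))"
    by (simp add: int Bochner_Integration.integral_sum EF_def F_def)
  finally show ?thesis unfolding Om_def .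
qed


end
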